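(* Let $k\ge3$, $q=p^e$, and let $S(k,q)=S(k,q;f_3,g_3,\ldots,f_k,g_k)$ where each $g_i$ has zero constant term and $1\le d_g<p$. If at least one of the following two conditions holds, then $S(k,q)$ is connected: (1) the polynomials $1,X,f_3,\ldots,f_k$ are $\mathbb{F}_q$-linearly independent and each $g_i$, $3\le i\le k$, has a nonzero coefficient of $X$; (2) the polynomials $f_3,\ldots,f_k$ are $\mathbb{F}_q$-linearly independent and there exists $j$ with $2\le j\le d_g$ such that each $g_i$, $3\le i\le k$, has a nonzero coefficient of $X^j$.
   Context: For $k\ge3$ and polynomials $f_i,g_i\in\mathbb{F}_q[X]$ ($3\le i\le k$) of degree at most $q-1$ with $g_i(-X)=-g_i(X)$, $S(k,q;f_3,g_3,\ldots,f_k,g_k)$ is the simple graph on vertex set $\mathbb{F}_q^k$ in which $a=(a_1,\ldots,a_k)$ and $b=(b_1,\ldots,b_k)$ are adjacent iff $a_1\ne b_1$ and $b_i-a_i=g_i(b_1-a_1)f_i\!\left(\frac{b_2-a_2}{b_1-a_1}\right)$ for $3\le i\le k$. $d_g=\max_{3\le i\le k}\deg g_i$. *)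

theory Defs
  imports "HOL-Computational_Algebra.Polynomial" "HOL-Computational_Algebra.Primes" "HOL-Library.Cardinality"
begin

text \<open>Vertices of S(k,q): points of F_q^k, represented as functions with 1-based
indices 1..k (value 0 outside).\<close>
definition S_vertices :: "nat \<Rightarrow> (nat \<Rightarrow> 'a::zero) set" where
  "S_vertices k = {v. \<forall>i. (i < 1 \<or> k < i) \<longrightarrow> v i = 0}"

definition S_adj :: "nat \<Rightarrow> (nat \<Rightarrow> 'a::field poly) \<Rightarrow> (nat \<Rightarrow> 'a poly)
    \<Rightarrow> (nat \<Rightarrow> 'a) \<Rightarrow> (nat \<Rightarrow> 'a) \<Rightarrow> bool" where
  "S_adj k f g a b \<longleftrightarrow> a 1 \<noteq> b 1 \<and>
     (\<forall>i\<in>{3..k}. b i - a i = poly (g i) (b 1 - a 1) * poly (f i) ((b 2 - a 2) / (b 1 - a 1)))"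

definition S_connected :: "nat \<Rightarrow> (nat \<Rightarrow> 'a::field poly) \<Rightarrow> (nat \<Rightarrow> 'a poly) \<Rightarrow> bool" where
  "S_connected k f g \<longleftrightarrow>
     (\<forall>a\<in>S_vertices k. \<forall>b\<in>S_vertices k.
        (\<lambda>x y. x \<in> S_vertices k \<and> y \<in> S_vertices k \<and> S_adj k f g x y)\<^sup>*\<^sup>* a b)"

definition d_g :: "nat \<Rightarrow> (nat \<Rightarrow> 'a::zero poly) \<Rightarrow> nat" where
  "d_g k g = Max ((\<lambda>i. degree (g i)) ` {3..k})"

definition lin_indep_1_X_f :: "nat \<Rightarrow> (nat \<Rightarrow> 'a::field poly) \<Rightarrow> bool" where
  "lin_indep_1_X_f k f \<longleftrightarrow>
     (\<forall>c0 c1 (c :: nat \<Rightarrow> 'a).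
        smult c0 1 + smult c1 [:0, 1:] + (\<Sum>i\<in>{3..k}. smult (c i) (f i)) = 0 \<longrightarrow>
        c0 = 0 \<and> c1 = 0 \<and> (\<forall>i\<in>{3..k}. c i = 0))"

definition lin_indep_f :: "nat \<Rightarrow> (nat \<Rightarrow> 'a::field poly) \<Rightarrow> bool" where
  "lin_indep_f k f \<longleftrightarrow>
     (\<forall>c :: nat \<Rightarrow> 'a. (\<Sum>i\<in>{3..k}. smult (c i) (f i)) = 0 \<longrightarrow> (\<forall>i\<in>{3..k}. c i = 0))"

end

theory Submission
  imports Defs "HOL-Library.Function_Algebras"
begin

fun dif :: "nat \<Rightarrow> (nat \<Rightarrow> 'b::minus) \<Rightarrow> nat \<Rightarrow> 'b" where
  "dif 0 h = h"
| "dif (Suc d) h = dif d (\<lambda>t. h (Suc t) - h t)"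

lemma dif_closed:
  assumes "\<And>x y. x \<in> M \<Longrightarrow> y \<in> M \<Longrightarrow> x - y \<in> M"
  shows "(\<forall>t. h t \<in> M) \<Longrightarrow> dif d h t \<in> M"
  by (induction d arbitrary: h t) (auto simp: assms)

lemma dif_coord: "dif d h t i = dif d (\<lambda>t. h t i) t"
  by (induction d arbitrary: h t) auto

lemma dif_sum:
  fixes c :: "'j \<Rightarrow> 'a::comm_ring_1"
  assumes "finite J"
  shows "dif d (\<lambda>t. \<Sum>j\<in>J. c j * F j t) t = (\<Sum>j\<in>J. c j * dif d (F j) t)"
proof (induction d arbitrary: F t)
  case 0
  then show ?case by simp
next
  case (Suc d)
  have "dif (Suc d) (\<lambda>t. \<Sum>j\<in>J. c j * F j t) t
      = dif d (\<lambda>t. \<Sum>j\<in>J. c j * (F j (Suc t) - F j t)) t"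
    by (simp add: sum_subtractf right_diff_distrib)
  also have "\<dots> = (\<Sum>j\<in>J. c j * dif d (\<lambda>t. F j (Suc t) - F j t) t)"
    by (rule Suc)
  finally show ?case by simp
qed

lemma dif_pow:
  "i \<le> d \<Longrightarrow> dif d (\<lambda>t. of_nat t ^ i :: 'a::comm_ring_1) t = (if i = d then of_nat (fact d) else 0)"
proof (induction d arbitrary: i t)
  case 0
  then show ?case by simp
next
  case (Suc d)
  have e: "(\<lambda>t. (of_nat (Suc t) :: 'a) ^ i - of_nat t ^ i) = (\<lambda>t. \<Sum>m<i. of_nat (i choose m) * of_nat t ^ m)"
  proof
    fix t
    have "(of_nat (Suc t) :: 'a) ^ i = (of_nat t + 1) ^ i" by (simp add: add.commute)
    also have "\<dots> = (\<Sum>m\<le>i. of_nat (i choose m) * of_nat t ^ m)"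
      by (subst binomial_ring) simp
    also have "\<dots> = (\<Sum>m<i. of_nat (i choose m) * of_nat t ^ m) + of_nat t ^ i"
      by (simp add: lessThan_Suc_atMost[symmetric])
    finally show "(of_nat (Suc t) :: 'a) ^ i - of_nat t ^ i = (\<Sum>m<i. of_nat (i choose m) * of_nat t ^ m)"
      by simp
  qed
  have "dif (Suc d) (\<lambda>t. of_nat t ^ i :: 'a) t = (\<Sum>m<i. of_nat (i choose m) * dif d (\<lambda>t. of_nat t ^ m :: 'a) t)"
  proof -
    have "dif (Suc d) (\<lambda>t. of_nat t ^ i :: 'a) t = dif d (\<lambda>t. (of_nat (Suc t) :: 'a) ^ i - of_nat t ^ i) t"
      by (simp only: dif.simps)
    also have "\<dots> = dif d (\<lambda>t. \<Sum>m<i. of_nat (i choose m) * of_nat t ^ m) t"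
      by (simp only: e)
    also have "\<dots> = (\<Sum>m<i. of_nat (i choose m) * dif d (\<lambda>t. of_nat t ^ m :: 'a) t)"
      by (rule dif_sum) simp
    finally show ?thesis .
  qed
  also have "\<dots> = (\<Sum>m<i. of_nat (i choose m) * (if m = d then of_nat (fact d) else 0))"
    using Suc by (intro sum.cong refl) simp
  also have "\<dots> = (if i = Suc d then of_nat (fact (Suc d)) else 0)"
  proof (cases "i = Suc d")
    case True
    then show ?thesis by (simp add: if_distrib sum.delta algebra_simps)
  next
    case False
    then have "i \<le> d" using Suc by simp
    then show ?thesis by (simp add: if_distrib sum.delta)
  qed
  finally show ?case .
qed

lemma dif_poly:
  "dif N (\<lambda>t. \<Sum>j\<le>N. of_nat t ^ j * (a j :: 'a::comm_ring_1)) t = of_nat (fact N) * a N"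
proof -
  have "dif N (\<lambda>t. \<Sum>j\<le>N. of_nat t ^ j * a j) t = dif N (\<lambda>t. \<Sum>j\<le>N. a j * of_nat t ^ j) t"
    by (simp add: mult.commute)
  also have "\<dots> = (\<Sum>j\<le>N. a j * dif N (\<lambda>t. of_nat t ^ j) t)" by (rule dif_sum) simp
  also have "\<dots> = (\<Sum>j\<le>N. a j * (if j = N then of_nat (fact N) else 0))"
    by (intro sum.cong refl) (simp add: dif_pow)
  also have "\<dots> = (\<Sum>j\<le>N. if j = N then a j * of_nat (fact N) else 0)"
    by (intro sum.cong refl) simp
  also have "\<dots> = of_nat (fact N) * a N" by (simp add: mult.commute)
  finally show ?thesis .
qed

lemma grp_add:
  fixes M :: "'b::ab_group_add set"
  assumes z: "0 \<in> M" and d: "\<And>x y. x\<in>M \<Longrightarrow> y\<in>M \<Longrightarrow> x - y \<in> M"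
    and "x \<in> M" "y \<in> M"
  shows "x + y \<in> M"
proof -
  have "x - (0 - y) \<in> M" using assms by blast
  then show ?thesis by simp
qed

lemma grp_nat_mult:
  fixes M :: "(nat \<Rightarrow> 'a::comm_ring_1) set"
  assumes z: "0 \<in> M" and d: "\<And>x y. x\<in>M \<Longrightarrow> y\<in>M \<Longrightarrow> x - y \<in> M"
    and v: "v \<in> M"
  shows "(\<lambda>i. of_nat m * v i) \<in> M"
proof (induction m)
  case 0
  then show ?case using z by (simp add: zero_fun_def)
next
  case (Suc m)
  have "(\<lambda>i. of_nat (Suc m) * v i) = v + (\<lambda>i. of_nat m * v i)"
    by (auto simp: algebra_simps)
  then show ?case using grp_add[OF z d v Suc] by simp
qed

lemma peel:
  fixes M :: "(nat \<Rightarrow> 'a::comm_ring_1) set"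
  assumes z: "0 \<in> M" and d: "\<And>x y. x\<in>M \<Longrightarrow> y\<in>M \<Longrightarrow> x - y \<in> M"
  shows "(\<forall>t. (\<lambda>i. \<Sum>j\<le>N. of_nat t ^ j * A j i) \<in> M) \<Longrightarrow> j \<le> N
     \<Longrightarrow> (\<lambda>i. of_nat (fact N ^ Suc N) * A j i) \<in> M"
proof (induction N arbitrary: A j)
  case 0
  then show ?case by simp
next
  case (Suc N)
  define h where "h = (\<lambda>t i. \<Sum>j\<le>Suc N. of_nat t ^ j * A j i)"
  have ht: "h t \<in> M" for t
    using Suc.prems(1) unfolding h_def by blast
  have "dif (Suc N) h 0 \<in> M"
    by (rule dif_closed[where M=M]) (auto intro: d ht)
  moreover have "dif (Suc N) h 0 = (\<lambda>i. of_nat (fact (Suc N)) * A (Suc N) i)"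
    by (rule ext, subst dif_coord) (simp only: h_def dif_poly)
  ultimately have B: "(\<lambda>i. of_nat (fact (Suc N)) * A (Suc N) i) \<in> M" by simp
  define A' where "A' = (\<lambda>j i. of_nat (fact (Suc N)) * A j i)"
  have "(\<lambda>i. \<Sum>j\<le>N. of_nat t ^ j * A' j i) \<in> M" for t
  proof -
    have "(\<lambda>i. \<Sum>j\<le>N. of_nat t ^ j * A' j i) =
       (\<lambda>i. of_nat (fact (Suc N)) * h t i) - (\<lambda>i. of_nat (t ^ Suc N) * (of_nat (fact (Suc N)) * A (Suc N) i))"
      by (rule ext) (simp add: h_def A'_def sum_distrib_left algebra_simps)
    moreover have "(\<lambda>i. of_nat (fact (Suc N)) * h t i) \<in> M"
      using grp_nat_mult[OF z d ht] by blast
    moreover have "(\<lambda>i. of_nat (t ^ Suc N) * (of_nat (fact (Suc N)) * A (Suc N) i)) \<in> M"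
      by (rule grp_nat_mult[OF z d B])
    ultimately show ?thesis using d by simp
  qed
  then have IH: "j \<le> N \<Longrightarrow> (\<lambda>i. of_nat (fact N ^ Suc N) * A' j i) \<in> M" for j
    using Suc.IH by blast
  show ?case
  proof (cases "j = Suc N")
    case True
    have "(\<lambda>i. of_nat (fact (Suc N) ^ Suc N) * (of_nat (fact (Suc N)) * A (Suc N) i)) \<in> M"
      by (rule grp_nat_mult[OF z d B])
    then show ?thesis using True by (simp add: algebra_simps)
  next
    case False
    then have "j \<le> N" using Suc.prems by simp
    have "(\<lambda>i. of_nat (Suc N ^ Suc N) * (of_nat (fact N ^ Suc N) * A' j i)) \<in> M"
      by (rule grp_nat_mult[OF z d IH[OF \<open>j \<le> N\<close>]])
    moreover have fe: "fact (Suc N) ^ Suc (Suc N) = Suc N ^ Suc N * (fact N ^ Suc N * fact (Suc N))"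
    proof -
      have f: "fact (Suc N) = Suc N * fact N" by simp
      have "fact (Suc N) ^ Suc (Suc N) = fact (Suc N) ^ Suc N * (fact (Suc N) :: nat)"
        by (rule power_Suc2)
      also have "\<dots> = (Suc N * fact N) ^ Suc N * fact (Suc N)" by (simp only: f)
      also have "\<dots> = Suc N ^ Suc N * (fact N ^ Suc N * fact (Suc N))"
        by (simp only: power_mult_distrib mult.assoc)
      finally show ?thesis .
    qed
    moreover have "(\<lambda>i. of_nat (fact (Suc N) ^ Suc (Suc N)) * A j i) = (\<lambda>i. of_nat (Suc N ^ Suc N) * (of_nat (fact N ^ Suc N) * A' j i))"
      by (rule ext) (simp only: A'_def fe of_nat_mult mult.assoc)
    ultimately show ?thesis by simp
  qed
qed


lemma span_all:
  fixes S :: "(nat \<Rightarrow> 'a::field) set"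
  assumes "finite I"
  shows "\<lbrakk> \<forall>s\<in>S. \<forall>i. i\<notin>I \<longrightarrow> s i = 0; 0\<in>S; \<forall>v\<in>S. \<forall>w\<in>S. v + w \<in> S;
     \<forall>c. \<forall>v\<in>S. (\<lambda>i. c * v i) \<in> S;
     \<forall>a. (\<forall>s\<in>S. (\<Sum>i\<in>I. a i * s i) = 0) \<longrightarrow> (\<forall>i\<in>I. a i = 0) \<rbrakk>
     \<Longrightarrow> (\<forall>i. i\<notin>I \<longrightarrow> v i = 0) \<Longrightarrow> v \<in> S"
  using assms
proof (induction I arbitrary: S v rule: finite_induct)
  case empty
  then have "v = 0" by (auto simp: fun_eq_iff)
  then show ?case using empty by simp
next
  case (insert x I)
  note supp = insert.prems(1) and z = insert.prems(2) and ad = insert.prems(3)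
    and sc = insert.prems(4) and ann = insert.prems(5) and vsupp = insert.prems(6)
  have "\<exists>s\<in>S. s x \<noteq> 0"
  proof (rule ccontr)
    assume "\<not> ?thesis"
    have "\<forall>s\<in>S. (\<Sum>i\<in>insert x I. (if i = x then 1 else 0) * s i) = 0"
    proof
      fix s assume "s \<in> S"
      have "(\<Sum>i\<in>insert x I. (if i = x then 1 else 0) * s i) = s x + (\<Sum>i\<in>I. (if i = x then 1 else 0) * s i)"
        using insert.hyps by simp
      also have "(\<Sum>i\<in>I. (if i = x then 1 else 0) * s i) = 0"
        by (rule sum.neutral) (use insert.hyps in auto)
      finally show "(\<Sum>i\<in>insert x I. (if i = x then 1 else 0) * s i) = 0"
        using \<open>s \<in> S\<close> \<open>\<not> (\<exists>s\<in>S. s x \<noteq> 0)\<close> by auto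
    qed
    then show False using ann by fastforce
  qed
  then obtain s0 where s0: "s0 \<in> S" "s0 x \<noteq> 0" by blast
  define S' where "S' = {s\<in>S. s x = 0}"
  have red: "(\<lambda>i. s i + (- (s x / s0 x)) * s0 i) \<in> S'" if "s \<in> S" for s
  proof -
    have "(\<lambda>i. (- (s x / s0 x)) * s0 i) \<in> S" using sc s0 by blast
    then have "s + (\<lambda>i. (- (s x / s0 x)) * s0 i) \<in> S" using ad that by blast
    moreover have "s + (\<lambda>i. (- (s x / s0 x)) * s0 i) = (\<lambda>i. s i + (- (s x / s0 x)) * s0 i)"
      by (simp add: fun_eq_iff)
    ultimately show ?thesis using s0 by (simp add: S'_def)
  qed
  have "v' \<in> S'" if "\<forall>i. i\<notin>I \<longrightarrow> v' i = 0" for v'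
  proof (rule insert.IH[of S' v'])
    show "\<forall>s\<in>S'. \<forall>i. i \<notin> I \<longrightarrow> s i = 0" using supp by (auto simp: S'_def)
    show "0 \<in> S'" using z by (simp add: S'_def zero_fun_def)
    show "\<forall>v\<in>S'. \<forall>w\<in>S'. v + w \<in> S'" using ad by (auto simp: S'_def plus_fun_def)
    show "\<forall>c. \<forall>v\<in>S'. (\<lambda>i. c * v i) \<in> S'" using sc by (auto simp: S'_def)
    show "\<forall>i. i \<notin> I \<longrightarrow> v' i = 0" by (rule that)
    show "\<forall>a. (\<forall>s\<in>S'. (\<Sum>i\<in>I. a i * s i) = 0) \<longrightarrow> (\<forall>i\<in>I. a i = 0)"
    proof (intro allI impI)
      fix a assume a: "\<forall>s\<in>S'. (\<Sum>i\<in>I. a i * s i) = 0"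
      define b where "b = a(x := - (\<Sum>i\<in>I. a i * s0 i) / s0 x)"
      have "\<forall>s\<in>S. (\<Sum>i\<in>insert x I. b i * s i) = 0"
      proof
        fix s assume s: "s \<in> S"
        have "(\<Sum>i\<in>I. a i * (s i + (- (s x / s0 x)) * s0 i)) = 0"
          using bspec[OF a red[OF s]] by simp
        then have e: "(\<Sum>i\<in>I. a i * s i) = (s x / s0 x) * (\<Sum>i\<in>I. a i * s0 i)"
          by (simp add: algebra_simps sum_subtractf sum_distrib_left sum_negf)
        have "(\<Sum>i\<in>insert x I. b i * s i) = b x * s x + (\<Sum>i\<in>I. a i * s i)"
          using insert.hyps by (simp add: b_def, intro sum.cong) auto
        also have "\<dots> = 0" using s0 by (simp add: e b_def field_simps)
        finally show "(\<Sum>i\<in>insert x I. b i * s i) = 0" .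
      qed
      then have "\<forall>i\<in>insert x I. b i = 0" using ann by blast
      then show "\<forall>i\<in>I. a i = 0" using insert.hyps unfolding b_def by (metis fun_upd_other insertCI)
    qed
  qed
  then have inS': "v' \<in> S'" if "\<forall>i. i\<notin>I \<longrightarrow> v' i = 0" for v' using that by blast
  define r where "r = (\<lambda>i. v i + (- (v x / s0 x)) * s0 i)"
  have "\<forall>i. i\<notin>I \<longrightarrow> r i = 0"
  proof (intro allI impI)
    fix i assume "i \<notin> I"
    show "r i = 0"
    proof (cases "i = x")
      case True then show ?thesis using s0 by (simp add: r_def)
    next
      case False
      then have "v i = 0" "s0 i = 0" using vsupp supp s0 \<open>i \<notin> I\<close> by auto
      then show ?thesis by (simp add: r_def)
    qed
  qed
  then have "r \<in> S" using inS' by (simp add: S'_def)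
  moreover have "(\<lambda>i. (v x / s0 x) * s0 i) \<in> S" using sc s0 by blast
  ultimately have "r + (\<lambda>i. (v x / s0 x) * s0 i) \<in> S" using ad by blast
  moreover have "r + (\<lambda>i. (v x / s0 x) * s0 i) = v" by (simp add: r_def fun_eq_iff)
  ultimately show ?case by simp
qed


lemma of_nat_CARD_zero: "of_nat CARD('a::{finite,ring_1}) = (0::'a)"
proof -
  have "(\<Sum>x\<in>UNIV. x + 1) = (\<Sum>x\<in>(UNIV::'a set). x)"
    by (rule sum.reindex_bij_witness[of _ "\<lambda>x. x - 1" "\<lambda>x. x + 1"]) auto
  then show ?thesis by (simp add: sum.distrib)
qed

lemma poly_zero_if_vanish:
  fixes P :: "'a::{finite,field} poly"
  assumes "\<forall>x. poly P x = 0" "degree P < CARD('a)"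
  shows "P = 0"
proof (rule ccontr)
  assume "P \<noteq> 0"
  then have "card {x. poly P x = 0} \<le> degree P" by (rule card_poly_roots_bound)
  moreover have "{x. poly P x = 0} = UNIV" using assms by auto
  ultimately show False using assms by simp
qed

lemma poly_sum_upto:
  fixes p :: "'a::comm_ring_1 poly"
  assumes "degree p \<le> D"
  shows "poly p c = (\<Sum>j\<le>D. coeff p j * c ^ j)"
proof -
  have "poly p c = (\<Sum>j\<le>degree p. coeff p j * c ^ j)" by (rule poly_altdef)
  also have "\<dots> = (\<Sum>j\<le>D. coeff p j * c ^ j)"
    by (rule sum.mono_neutral_left) (use assms in \<open>auto simp: coeff_eq_0\<close>)
  finally show ?thesis .
qed

lemma char_p:
  assumes "prime p" "e \<ge> 1" "CARD('a::{finite,field}) = p ^ e"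
  shows "CHAR('a) = p"
proof -
  have "of_nat (p ^ e) = (0::'a)" using of_nat_CARD_zero[where 'a='a] assms by simp
  then have "CHAR('a) dvd p ^ e" by (simp only: of_nat_eq_0_iff_char_dvd)
  moreover have "CHAR('a) > 0" by (rule finite_imp_CHAR_pos) simp
  then have "prime CHAR('a)" by (rule prime_CHAR_semidom)
  ultimately have "CHAR('a) dvd p" using prime_dvd_power by blast
  then show ?thesis using \<open>prime CHAR('a)\<close> assms(1) primes_dvd_imp_eq by blast
qed

lemma sum_1_2_rest:
  assumes "k \<ge> (3::nat)"
  shows "(\<Sum>i\<in>{1..k}. F i) = F 1 + F 2 + (\<Sum>i\<in>{3..k}. F i)"
proof -
  have "{1..k} = insert 1 (insert 2 {3..k})" using assms by auto
  then show ?thesis by (simp add: add.assoc)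
qed


lemma sum_delta1:
  assumes "1 \<le> (D::nat)"
  shows "(\<Sum>j\<le>D. a j * (if j = 1 then y else 0)) = a 1 * (y::'a::comm_ring_1)"
proof -
  have "(\<Sum>j\<le>D. a j * (if j = 1 then y else 0)) = (\<Sum>j\<le>D. if j = 1 then a j * y else 0)"
    by (rule sum.cong) auto
  then show ?thesis using assms by simp
qed

theorem mainTheorem9:
  fixes k p e :: nat
    and f g :: "nat \<Rightarrow> 'a::{finite, field} poly"
  assumes "k \<ge> 3"
    and "prime p" and "e \<ge> 1" and "CARD('a) = p ^ e"
    and "\<forall>i\<in>{3..k}. degree (f i) \<le> CARD('a) - 1 \<and> degree (g i) \<le> CARD('a) - 1"
    and "\<forall>i\<in>{3..k}. pcompose (g i) [:0, -1:] = - g i"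
    and "\<forall>i\<in>{3..k}. coeff (g i) 0 = 0"
    and "1 \<le> d_g k g" and "d_g k g < p"
    and "(lin_indep_1_X_f k f \<and> (\<forall>i\<in>{3..k}. coeff (g i) 1 \<noteq> 0)) \<or>
         (lin_indep_f k f \<and> (\<exists>j. 2 \<le> j \<and> j \<le> d_g k g \<and> (\<forall>i\<in>{3..k}. coeff (g i) j \<noteq> 0)))"
  shows "S_connected k f g"
proof -
  let ?V = "S_vertices k :: (nat \<Rightarrow> 'a) set"
  define D where "D = d_g k g"
  have D1: "1 \<le> D" and Dp: "D < p" using assms by (simp_all add: D_def)
  have degg: "degree (g i) \<le> D" if "i \<in> {3..k}" for i
    unfolding D_def d_g_def using that by (intro Max_ge) auto
  have charp: "CHAR('a) = p" by (rule char_p[OF assms(2,3,4)])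
  have nz: "of_nat n \<noteq> (0::'a)" if "\<not> p dvd n" for n
    using that charp by (simp add: of_nat_eq_0_iff_char_dvd)
  have nzfact: "of_nat (fact m ^ Suc m) \<noteq> (0::'a)" if "m < p" for m
  proof (rule nz)
    show "\<not> p dvd fact m ^ Suc m"
    proof
      assume "p dvd fact m ^ Suc m"
      then have "p dvd fact m" using prime_dvd_power assms(2) by blast
      then have "p \<le> m" using prime_dvd_fact_iff assms(2) by blast
      then show False using that by simp
    qed
  qed
  have card2: "CARD('a) \<ge> 2"
  proof -
    have "p \<ge> 2" using assms(2) prime_ge_2_nat by blast
    moreover have "p \<le> p ^ e" using assms(3) prime_gt_0_nat[OF assms(2)]
      by (metis One_nat_def Suc_le_eq power_increasing power_one_right)
    ultimately show ?thesis using assms(4) by simp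
  qed
  have godd: "poly (g i) (- x) = - poly (g i) x" if "i \<in> {3..k}" for i x
  proof -
    have "poly (pcompose (g i) [:0, -1:]) x = poly (- g i) x" using assms(6) that by simp
    then show ?thesis by (simp add: poly_pcompose)
  qed
  have g0: "poly (g i) 0 = 0" if "i \<in> {3..k}" for i
    using assms(7) that by (simp add: poly_0_coeff_0)
  have Vdef: "v \<in> ?V \<longleftrightarrow> (\<forall>i. i \<notin> {1..k} \<longrightarrow> v i = 0)" for v :: "nat \<Rightarrow> 'a"
    by (auto simp: S_vertices_def not_le)
  define R where "R = (\<lambda>x y. x \<in> ?V \<and> y \<in> ?V \<and> S_adj k f g x y)"
  have Rsym: "symp R"
  proof (rule sympI)
    fix x y assume Rxy: "R x y"
    have "x i - y i = poly (g i) (x 1 - y 1) * poly (f i) ((x 2 - y 2) / (x 1 - y 1))"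
      if i: "i \<in> {3..k}" for i
    proof -
      have e2: "(x 2 - y 2) / (x 1 - y 1) = (y 2 - x 2) / (y 1 - x 1)"
        by (metis minus_diff_eq minus_divide_divide)
      have pg: "poly (g i) (x 1 - y 1) = - poly (g i) (y 1 - x 1)"
        using godd[OF i, of "y 1 - x 1"] by simp
      have eq: "y i - x i = poly (g i) (y 1 - x 1) * poly (f i) ((y 2 - x 2) / (y 1 - x 1))"
        using Rxy i by (simp add: R_def S_adj_def)
      have "x i - y i = - (y i - x i)" by simp
      also have "\<dots> = poly (g i) (x 1 - y 1) * poly (f i) ((x 2 - y 2) / (x 1 - y 1))"
        by (simp only: eq pg e2) simp
      finally show ?thesis .
    qed
    then show "R y x" using Rxy by (auto simp: R_def S_adj_def)
  qed
  define M where "M = {m \<in> ?V. \<forall>a\<in>?V. R\<^sup>*\<^sup>* a (\<lambda>i. a i + m i)}"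
  have Vadd: "(\<lambda>i. v i + w i) \<in> ?V" if "v \<in> ?V" "w \<in> ?V" for v w
    using that by (simp add: Vdef)
  have Vneg: "(\<lambda>i. - v i) \<in> ?V" if "v \<in> ?V" for v
    using that by (simp add: Vdef)
  have Mz: "0 \<in> M" by (simp add: M_def Vdef zero_fun_def)
  have Madd: "(\<lambda>i. m i + n i) \<in> M" if "m \<in> M" "n \<in> M" for m n
  proof -
    have "R\<^sup>*\<^sup>* a (\<lambda>i. a i + (m i + n i))" if a: "a \<in> ?V" for a
    proof -
      have am: "(\<lambda>i. a i + m i) \<in> ?V" using a \<open>m \<in> M\<close> by (simp add: M_def Vdef)
      have "R\<^sup>*\<^sup>* a (\<lambda>i. a i + m i)" using \<open>m \<in> M\<close> a by (simp add: M_def)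
      moreover have "R\<^sup>*\<^sup>* (\<lambda>i. a i + m i) (\<lambda>i. (a i + m i) + n i)"
        using \<open>n \<in> M\<close> am unfolding M_def by blast
      ultimately show ?thesis by (simp add: add.assoc)
    qed
    moreover have "(\<lambda>i. m i + n i) \<in> ?V" using that by (simp add: M_def Vdef)
    ultimately show ?thesis by (simp add: M_def)
  qed
  have Mneg: "(\<lambda>i. - m i) \<in> M" if "m \<in> M" for m
  proof -
    have "R\<^sup>*\<^sup>* a (\<lambda>i. a i + - m i)" if a: "a \<in> ?V" for a
    proof -
      have a': "(\<lambda>i. a i + - m i) \<in> ?V" using a \<open>m \<in> M\<close> by (simp add: M_def Vdef)
      have "\<forall>b\<in>?V. R\<^sup>*\<^sup>* b (\<lambda>i. b i + m i)" using \<open>m \<in> M\<close> by (simp add: M_def)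
      then have "R\<^sup>*\<^sup>* (\<lambda>i. a i + - m i) (\<lambda>i. (a i + - m i) + m i)"
        using a' by blast
      moreover have "(\<lambda>i. (a i + - m i) + m i) = a" by (simp add: fun_eq_iff)
      ultimately have "R\<^sup>*\<^sup>* (\<lambda>i. a i + - m i) a" by simp
      then show ?thesis by (rule sympD[OF symp_rtranclp[OF Rsym]])
    qed
    moreover have "(\<lambda>i. - m i) \<in> ?V" using that by (simp add: M_def Vdef)
    ultimately show ?thesis by (simp add: M_def)
  qed
  have Mdiff: "x - y \<in> M" if "x \<in> M" "y \<in> M" for x y
  proof -
    have "(\<lambda>i. x i + - y i) \<in> M" using Madd[OF that(1) Mneg[OF that(2)]] .
    then show ?thesis by (simp add: fun_diff_def)
  qed
  define st where "st = (\<lambda>x y i. if i = 1 then x else if i = 2 then y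
      else if 3 \<le> i \<and> i \<le> k then poly (g i) x * poly (f i) (y / x) else (0::'a))"
  have Mst: "st x y \<in> M" if "x \<noteq> 0" for x y
  proof -
    have stV: "st x y \<in> ?V" using assms(1) by (auto simp: Vdef st_def)
    have "R a (\<lambda>i. a i + st x y i)" if a: "a \<in> ?V" for a
      unfolding R_def S_adj_def using a stV Vadd \<open>x \<noteq> 0\<close> by (auto simp: st_def)
    then have "R\<^sup>*\<^sup>* a (\<lambda>i. a i + st x y i)" if a: "a \<in> ?V" for a
      using that by blast
    then show ?thesis using stV by (simp add: M_def)
  qed
  define A where "A = (\<lambda>(x::'a) (u::'a) (j::nat) (i::nat).
      if i = 1 then (if j = 1 then x else 0)
      else if i = 2 then (if j = 1 then x * u else 0)
      else if 3 \<le> i \<and> i \<le> k then coeff (g i) j * x ^ j * poly (f i) u else 0)"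
  have hpoly: "(\<lambda>i. \<Sum>j\<le>D. of_nat t ^ j * A x u j i) \<in> M" for t x u
  proof -
    define c where "c = of_nat t * x"
    have eq: "(\<lambda>i. \<Sum>j\<le>D. of_nat t ^ j * A x u j i) = (\<lambda>i. if i = 1 then c else if i = 2 then c * u
        else if 3 \<le> i \<and> i \<le> k then poly (g i) c * poly (f i) u else 0)"
    proof
      fix i
      show "(\<Sum>j\<le>D. of_nat t ^ j * A x u j i) = (if i = 1 then c else if i = 2 then c * u
        else if 3 \<le> i \<and> i \<le> k then poly (g i) c * poly (f i) u else 0)"
      proof (cases "i = 1 \<or> i = 2")
        case True
        then show ?thesis using sum_delta1[OF D1, of "\<lambda>j. of_nat t ^ j"]
          by (auto simp: A_def c_def algebra_simps)
      next
        case False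
        show ?thesis
        proof (cases "3 \<le> i \<and> i \<le> k")
          case True
          have "(\<Sum>j\<le>D. of_nat t ^ j * A x u j i) = (\<Sum>j\<le>D. coeff (g i) j * c ^ j * poly (f i) u)"
            by (rule sum.cong) (use False True in \<open>simp_all add: A_def c_def power_mult_distrib algebra_simps\<close>)
          also have "\<dots> = (\<Sum>j\<le>D. coeff (g i) j * c ^ j) * poly (f i) u"
            by (simp add: sum_distrib_right)
          also have "\<dots> = poly (g i) c * poly (f i) u"
            using poly_sum_upto[OF degg, of i c] True by simp
          finally show ?thesis using False True by simp
        next
          case False2: False
          have "A x u j i = 0" for j using False False2 by (auto simp: A_def)
          then show ?thesis using False False2 by auto
        qed
      qed
    qed
    show ?thesis
    proof (cases "c = 0")
      case True
      have "(\<lambda>i. if i = 1 then c else if i = 2 then c * u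
        else if 3 \<le> i \<and> i \<le> k then poly (g i) c * poly (f i) u else 0) = 0"
        using True g0 by (auto simp: zero_fun_def)
      then show ?thesis using eq Mz by simp
    next
      case False
      have "(\<lambda>i. if i = 1 then c else if i = 2 then c * u
        else if 3 \<le> i \<and> i \<le> k then poly (g i) c * poly (f i) u else 0) = st c (c * u)"
        using False by (simp add: st_def fun_eq_iff)
      then show ?thesis using eq Mst[OF False] by simp
    qed
  qed
  define K where "K = (of_nat (fact D ^ Suc D) :: 'a)"
  have K0: "K \<noteq> 0" using nzfact Dp by (simp add: K_def)
  have peelA: "(\<lambda>i. K * A x u j i) \<in> M" if "j \<le> D" for x u j
    unfolding K_def by (rule peel[OF Mz Mdiff]) (use hpoly that in auto)
  define T where "T = {v \<in> ?V. \<forall>c. (\<lambda>i. c * v i) \<in> M}"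
  have TV: "?V \<subseteq> T" if ann: "\<forall>a. (\<forall>s\<in>T. (\<Sum>i\<in>{1..k}. a i * s i) = 0) \<longrightarrow> (\<forall>i\<in>{1..k}. a i = 0)"
  proof
    fix v assume v: "v \<in> ?V"
    show "v \<in> T"
    proof (rule span_all[of "{1..k}" T v])
      show "\<forall>s\<in>T. \<forall>i. i \<notin> {1..k} \<longrightarrow> s i = 0" by (auto simp: T_def Vdef)
      show "0 \<in> T" using Mz by (simp add: T_def Vdef zero_fun_def)
      show "\<forall>v\<in>T. \<forall>w\<in>T. v + w \<in> T"
      proof (intro ballI)
        fix v w assume "v \<in> T" "w \<in> T"
        then have "(\<lambda>i. c * (v i + w i)) \<in> M" for c
          using Madd[of "\<lambda>i. c * v i" "\<lambda>i. c * w i"] by (simp add: T_def distrib_left)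
        then show "v + w \<in> T" using \<open>v \<in> T\<close> \<open>w \<in> T\<close> Vadd by (simp add: T_def plus_fun_def)
      qed
      show "\<forall>c. \<forall>v\<in>T. (\<lambda>i. c * v i) \<in> T"
      proof (intro allI ballI)
        fix c v assume "v \<in> T"
        then have "(\<lambda>i. (d * c) * v i) \<in> M" for d
          by (simp add: T_def)
        then have "(\<lambda>i. d * (c * v i)) \<in> M" for d
          by (simp add: mult.assoc)
        then show "(\<lambda>i. c * v i) \<in> T" using \<open>v \<in> T\<close> by (simp add: T_def Vdef)
      qed
      show "\<forall>a. (\<forall>s\<in>T. (\<Sum>i\<in>{1..k}. a i * s i) = 0) \<longrightarrow> (\<forall>i\<in>{1..k}. a i = 0)"
        by (rule ann)
      show "\<forall>i. i \<notin> {1..k} \<longrightarrow> v i = 0" using v Vdef by blast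
    qed simp
  qed
  have w1T: "(\<lambda>i. A 1 u 1 i) \<in> T" for u
  proof -
    have eq: "(\<lambda>i. c * A 1 u 1 i) = (\<lambda>i. K * A (c / K) u 1 i)" for c
      using K0 by (simp add: A_def fun_eq_iff)
    have "(\<lambda>i. c * A 1 u 1 i) \<in> M" for c
      unfolding eq by (rule peelA[OF D1])
    moreover have "(\<lambda>i. A 1 u 1 i) \<in> ?V" using assms(1) by (auto simp: Vdef A_def)
    ultimately show ?thesis by (simp add: T_def)
  qed
  have conn: "S_connected k f g" if VT: "?V \<subseteq> T"
    unfolding S_connected_def
  proof (intro ballI)
    fix a b assume a: "a \<in> ?V" and b: "b \<in> ?V"
    have "(\<lambda>i. b i - a i) \<in> ?V" using a b by (simp add: Vdef)
    then have "(\<lambda>i. b i - a i) \<in> T" using VT by blast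
    then have "\<forall>c. (\<lambda>i. c * (b i - a i)) \<in> M" by (simp add: T_def)
    then have "(\<lambda>i. 1 * (b i - a i)) \<in> M" by (rule spec)
    then have "(\<lambda>i. b i - a i) \<in> M" by simp
    then have "\<forall>a'\<in>?V. R\<^sup>*\<^sup>* a' (\<lambda>i. a' i + (b i - a i))" by (simp add: M_def)
    then have "R\<^sup>*\<^sup>* a (\<lambda>i. a i + (b i - a i))" using a by (rule bspec)
    then show "(\<lambda>x y. x \<in> ?V \<and> y \<in> ?V \<and> S_adj k f g x y)\<^sup>*\<^sup>* a b"
      by (simp add: R_def)
  qed
  show ?thesis
  proof (rule conn, rule TV, intro allI impI)
    fix a assume H: "\<forall>s\<in>T. (\<Sum>i\<in>{1..k}. a i * s i) = 0"
    have sumA: "(\<Sum>i\<in>{1..k}. a i * A 1 u j i) = a 1 * A 1 u j 1 + a 2 * A 1 u j 2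
        + (\<Sum>i\<in>{3..k}. a i * (coeff (g i) j * poly (f i) u))" for u j
    proof -
      have "(\<Sum>i\<in>{1..k}. a i * A 1 u j i) = a 1 * A 1 u j 1 + a 2 * A 1 u j 2 + (\<Sum>i\<in>{3..k}. a i * A 1 u j i)"
        by (rule sum_1_2_rest[OF assms(1)])
      moreover have "(\<Sum>i\<in>{3..k}. a i * A 1 u j i) = (\<Sum>i\<in>{3..k}. a i * (coeff (g i) j * poly (f i) u))"
        by (rule sum.cong) (auto simp: A_def)
      ultimately show ?thesis by simp
    qed
    have H1: "a 1 + a 2 * u + (\<Sum>i\<in>{3..k}. a i * (coeff (g i) 1 * poly (f i) u)) = 0" for u
    proof -
      have "(\<Sum>i\<in>{1..k}. a i * A 1 u 1 i) = 0" using bspec[OF H w1T[of u]] by simp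
      then have "a 1 * A 1 u 1 1 + a 2 * A 1 u 1 2 + (\<Sum>i\<in>{3..k}. a i * (coeff (g i) 1 * poly (f i) u)) = 0"
        by (simp only: sumA)
      then show ?thesis by (simp add: A_def)
    qed
    have degsum: "degree (\<Sum>i\<in>{3..k}. smult (c i) (f i)) \<le> CARD('a) - 1" for c
      by (rule degree_sum_le) (use assms(5) in \<open>auto intro: order.trans[OF degree_smult_le]\<close>)
    from assms(10) show "\<forall>i\<in>{1..k}. a i = 0"
    proof
      assume c1: "lin_indep_1_X_f k f \<and> (\<forall>i\<in>{3..k}. coeff (g i) 1 \<noteq> 0)"
      define P where "P = smult (a 1) 1 + smult (a 2) [:0, 1:] + (\<Sum>i\<in>{3..k}. smult (a i * coeff (g i) 1) (f i))"
      have "\<forall>x. poly P x = 0"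
      proof
        fix x show "poly P x = 0" using H1[of x] by (simp add: P_def poly_sum mult.assoc mult.commute[of x "a 2"])
      qed
      moreover have "degree P \<le> CARD('a) - 1" unfolding P_def
      proof (intro degree_add_le)
        show "degree (smult (a 1) 1) \<le> CARD('a) - 1" by (rule order.trans[OF degree_smult_le]) simp
        show "degree (smult (a 2) [:0, 1:]) \<le> CARD('a) - 1"
          by (rule order.trans[OF degree_smult_le]) (use card2 in simp)
      qed (rule degsum)
      then have "degree P < CARD('a)" using card2 by simp
      ultimately have P0: "P = 0" by (rule poly_zero_if_vanish)
      have L: "\<forall>c0 c1 (c :: nat \<Rightarrow> 'a).
        smult c0 1 + smult c1 [:0, 1:] + (\<Sum>i\<in>{3..k}. smult (c i) (f i)) = 0 \<longrightarrow>
        c0 = 0 \<and> c1 = 0 \<and> (\<forall>i\<in>{3..k}. c i = 0)" using c1 by (simp add: lin_indep_1_X_f_def)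
      have R: "a 1 = 0 \<and> a 2 = 0 \<and> (\<forall>i\<in>{3..k}. a i * coeff (g i) 1 = 0)"
        using L[rule_format, of "a 1" "a 2" "\<lambda>i. a i * coeff (g i) 1"] P0 by (simp add: P_def)
      show ?thesis
      proof
        fix i assume i: "i \<in> {1..k}"
        then have "i = 1 \<or> i = 2 \<or> i \<in> {3..k}" by auto
        then show "a i = 0" using R c1 by auto
      qed
    next
      assume c2: "lin_indep_f k f \<and> (\<exists>j. 2 \<le> j \<and> j \<le> d_g k g \<and> (\<forall>i\<in>{3..k}. coeff (g i) j \<noteq> 0))"
      then obtain j where j: "2 \<le> j" "j \<le> D" "\<forall>i\<in>{3..k}. coeff (g i) j \<noteq> 0"
        by (auto simp: D_def)
      have wjT: "(\<lambda>i. A 1 u j i) \<in> T" for u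
      proof -
        define K2 where "K2 = (of_nat (fact j ^ Suc j) :: 'a)"
        have K20: "K2 \<noteq> 0" using nzfact j(2) Dp by (simp add: K2_def)
        have j0: "(of_nat j :: 'a) \<noteq> 0"
        proof (rule nz)
          show "\<not> p dvd j" using j(1,2) Dp by (auto dest: dvd_imp_le)
        qed
        have Ay: "A y u j i = y ^ j * A 1 u j i" for y i using j(1) by (simp add: A_def)
        have key: "(\<lambda>i. K2 * (K * of_nat j * x * A 1 u j i)) \<in> M" for x
        proof -
          define A2 where "A2 = (\<lambda>m i. K * of_nat (j choose m) * x ^ (j - m) * A 1 u j i)"
          have hA2: "(\<lambda>i. \<Sum>m\<le>j. of_nat t ^ m * A2 m i) \<in> M" for t
          proof -
            have "(\<lambda>i. \<Sum>m\<le>j. of_nat t ^ m * A2 m i) = (\<lambda>i. K * A (of_nat t + x) u j i)"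
            proof
              fix i
              have bin: "(of_nat t + x) ^ j = (\<Sum>m\<le>j. of_nat (j choose m) * of_nat t ^ m * x ^ (j - m))"
                by (rule binomial_ring)
              have "(\<Sum>m\<le>j. of_nat t ^ m * A2 m i) = K * ((\<Sum>m\<le>j. of_nat (j choose m) * of_nat t ^ m * x ^ (j - m)) * A 1 u j i)"
                by (simp add: A2_def sum_distrib_left sum_distrib_right algebra_simps)
              also have "\<dots> = K * ((of_nat t + x) ^ j * A 1 u j i)" by (simp only: bin)
              also have "\<dots> = K * A (of_nat t + x) u j i" by (simp only: Ay[of "of_nat t + x" i])
              finally show "(\<Sum>m\<le>j. of_nat t ^ m * A2 m i) = K * A (of_nat t + x) u j i" .
            qed
            then show ?thesis using peelA[OF j(2)] by simp
          qed
          have "(\<lambda>i. of_nat (fact j ^ Suc j) * A2 (j - 1) i) \<in> M"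
            by (rule peel[OF Mz Mdiff, where N=j and A=A2 and j="j - 1"]) (use hA2 in auto)
          moreover have "j choose (j - 1) = j"
          proof -
            have "j choose (j - 1) = j choose (j - (j - 1))" using j(1) by (intro binomial_symmetric) simp
            also have "j - (j - 1) = 1" using j(1) by simp
            finally show ?thesis by simp
          qed
          moreover have "j - (j - 1) = 1" using j(1) by simp
          ultimately show ?thesis by (simp add: A2_def K2_def mult.assoc)
        qed
        have "(\<lambda>i. c * A 1 u j i) \<in> M" for c
        proof -
          have "(\<lambda>i. c * A 1 u j i) = (\<lambda>i. K2 * (K * of_nat j * (c / (K2 * K * of_nat j)) * A 1 u j i))"
            using K0 K20 j0 by (simp add: fun_eq_iff field_simps)
          then show ?thesis using key[of "c / (K2 * K * of_nat j)"] by simp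
        qed
        moreover have "(\<lambda>i. A 1 u j i) \<in> ?V" using assms(1) by (auto simp: Vdef A_def)
        ultimately show ?thesis by (simp add: T_def)
      qed
      have H2: "(\<Sum>i\<in>{3..k}. a i * (coeff (g i) j * poly (f i) u)) = 0" for u
      proof -
        have "(\<Sum>i\<in>{1..k}. a i * A 1 u j i) = 0" using bspec[OF H wjT[of u]] by simp
        then have "a 1 * A 1 u j 1 + a 2 * A 1 u j 2 + (\<Sum>i\<in>{3..k}. a i * (coeff (g i) j * poly (f i) u)) = 0"
          by (simp only: sumA)
        then show ?thesis using j(1) by (simp add: A_def)
      qed
      define P where "P = (\<Sum>i\<in>{3..k}. smult (a i * coeff (g i) j) (f i))"
      have "\<forall>x. poly P x = 0"
      proof
        fix x show "poly P x = 0" using H2[of x] by (simp add: P_def poly_sum mult.assoc)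
      qed
      moreover have "degree P < CARD('a)" using degsum[of "\<lambda>i. a i * coeff (g i) j"] card2
        by (simp add: P_def)
      ultimately have P0: "P = 0" by (rule poly_zero_if_vanish)
      have L: "\<forall>c :: nat \<Rightarrow> 'a. (\<Sum>i\<in>{3..k}. smult (c i) (f i)) = 0 \<longrightarrow> (\<forall>i\<in>{3..k}. c i = 0)"
        using c2 by (simp add: lin_indep_f_def)
      have R: "\<forall>i\<in>{3..k}. a i * coeff (g i) j = 0"
        using L[rule_format, of "\<lambda>i. a i * coeff (g i) j"] P0 by (simp add: P_def)
      then have R3: "\<forall>i\<in>{3..k}. a i = 0" using j(3) by auto
      then have "(\<Sum>i\<in>{3..k}. a i * (coeff (g i) 1 * poly (f i) u)) = 0" for u by simp
      then have "a 1 + a 2 * u = 0" for u using H1[of u] by simp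
      from this[of 0] this[of 1] have "a 1 = 0" "a 2 = 0" by simp_all
      show ?thesis
      proof
        fix i assume i: "i \<in> {1..k}"
        then have "i = 1 \<or> i = 2 \<or> i \<in> {3..k}" by auto
        then show "a i = 0" using R3 \<open>a 1 = 0\<close> \<open>a 2 = 0\<close> by auto
      qed
    qed
  qed
qed

end
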